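(* Let $p,q\in(0,1/2)$ with $\frac{\log p}{\log q}\notin\mathbb Q$. Then the system $\{S_1,S_2,S_3,S_4\}$, where $S_1(x)=px$, $S_2(x)=qx$, $S_3(x)=px+1-p$, $S_4(x)=qx+1-q$, does not have the weak separation property.
   Context: For a system $\{S_1,\dots,S_m\}$ of contracting similarities, let $I^*$ be the set of finite words over $\{1,\dots,m\}$ and $S_{\mathbf i}=S_{i_1}\circ\cdots\circ S_{i_n}$ for $\mathbf i=i_1\dots i_n$. The weak separation property (WSP, in the sense of Lau and Ngai) holds, equivalently (Zerner), if and only if the identity map is not an accumulation point of the family $\{S_{\mathbf j}^{-1}S_{\mathbf i}:\mathbf i,\mathbf j\in I^*\}\setminus\{\mathrm{Id}\}$ (in the topology of similarity maps, e.g. convergence of the coefficients of the affine maps). *)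

theory Defs
  imports "HOL-Analysis.Analysis"
begin

text \<open>A similarity of the real line is represented by its coefficient pair (a,b),
  standing for the affine map x \<mapsto> a*x + b (a \<noteq> 0).  The topology on
  similarities is that of convergence of coefficients, i.e. the product topology
  on real \<times> real.\<close>

type_synonym sim = "real \<times> real"

definition sim_apply :: "sim \<Rightarrow> real \<Rightarrow> real" where
  "sim_apply f x = fst f * x + snd f"

definition sim_comp :: "sim \<Rightarrow> sim \<Rightarrow> sim" where
  "sim_comp f g = (fst f * fst g, fst f * snd g + snd f)"

definition sim_inv :: "sim \<Rightarrow> sim" where
  "sim_inv f = (1 / fst f, - snd f / fst f)"

definition sim_id :: sim where
  "sim_id = (1, 0)"

definition words :: "sim list \<Rightarrow> nat list set" where
  "words S = {w. set w \<subseteq> {..<length S}}"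

fun word_map :: "sim list \<Rightarrow> nat list \<Rightarrow> sim" where
  "word_map S [] = sim_id"
| "word_map S (i # w) = sim_comp (S ! i) (word_map S w)"

text \<open>Weak separation property, via Zerner's characterization: the identity is not
  an accumulation point of {S_j^{-1} S_i : i, j words} minus {Id}.\<close>

definition WSP :: "sim list \<Rightarrow> bool" where
  "WSP S \<longleftrightarrow> \<not> (sim_id islimpt
      ({sim_comp (sim_inv (word_map S j)) (word_map S i) | i j. i \<in> words S \<and> j \<in> words S}
        - {sim_id}))"

end

theory Submission
  imports Defs
begin

lemma wm_rep:
  assumes "i < length S" "snd (S ! i) = 0"
  shows "word_map S (replicate n i) = (fst (S ! i) ^ n, 0)"
  using assms by (induction n) (auto simp: sim_id_def sim_comp_def)

theorem proposition9:
  fixes p q :: real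
  assumes "0 < p" "p < 1/2" "0 < q" "q < 1/2"
    and "ln p / ln q \<notin> \<rat>"
  shows "\<not> WSP [(p, 0), (q, 0), (p, 1 - p), (q, 1 - q)]"
proof -
  define S where "S = [(p, 0), (q, 0), (p, 1 - p), (q, 1 - q)]"
  define \<theta> where "\<theta> = ln p / ln q"
  have lp: "ln p < 0" and lq: "ln q < 0" using assms by auto
  have th0: "\<theta> > 0" unfolding \<theta>_def using lp lq by (simp add: divide_neg_neg)
  define T where "T = {sim_comp (sim_inv (word_map S j)) (word_map S i) | i j. i \<in> words S \<and> j \<in> words S} - {sim_id}"
  have key: "\<exists>y\<in>T. y \<noteq> sim_id \<and> dist y sim_id < e" if e: "e > 0" for e
  proof -
    have "continuous (at (0::real)) exp" by (rule isCont_exp)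
    then obtain d where d: "d > 0" "\<And>x'. dist x' 0 < d \<Longrightarrow> dist (exp x') (exp (0::real)) < e"
      using e unfolding continuous_at_eps_delta by blast
    obtain N :: nat where N: "(- ln q) / d < N" using reals_Archimedean2 by blast
    have "0 < (- ln q) / d" using lq d(1) by (simp add: divide_neg_pos)
    then have "0 < real N" using N by linarith
    then have Npos: "N > 0" by simp
    have "- ln q < real N * d" using N d(1) by (metis pos_divide_less_eq)
    then have Nr: "(- ln q) / N < d" using \<open>0 < real N\<close> by (metis pos_divide_less_eq mult.commute)
    obtain h k where hk: "0 < k" "k \<le> int N" "\<bar>of_int k * \<theta> - of_int h\<bar> < 1/N"
      using Dirichlet_approx[OF Npos] by blast
    have "1 / real N \<le> 1" using Npos by simp
    have "of_int k * \<theta> > 0" using hk th0 by simp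
    then have h0: "h \<ge> 0" using hk(3) \<open>1 / real N \<le> 1\<close> by linarith
    define x where "x = of_int k * ln p - of_int h * ln q"
    have xeq: "x = ln q * (of_int k * \<theta> - of_int h)"
      unfolding x_def \<theta>_def using lq by (simp add: field_simps)
    have xne: "x \<noteq> 0"
    proof
      assume "x = 0"
      then have "\<theta> = of_int h / of_int k" using xeq lq hk(1) by (simp add: field_simps)
      then show False using assms(5) unfolding \<theta>_def by (metis Rats_divide Rats_of_int)
    qed
    have "\<bar>x\<bar> = (- ln q) * \<bar>of_int k * \<theta> - of_int h\<bar>" using xeq lq by (simp add: abs_mult)
    also have "\<dots> \<le> (- ln q) * (1/N)" using hk(3) lq by (intro mult_left_mono) auto
    also have "\<dots> < d" using Nr by simp
    finally have xd: "\<bar>x\<bar> < d" .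
    have de: "dist (exp x) 1 < e" using d(2)[of x] xd by simp
    define i where "i = replicate (nat k) (0::nat)"
    define j where "j = replicate (nat h) (1::nat)"
    have wi: "word_map S i = (p ^ nat k, 0)" unfolding i_def S_def by (subst wm_rep) auto
    have wj: "word_map S j = (q ^ nat h, 0)" unfolding j_def S_def by (subst wm_rep) auto
    have iw: "i \<in> words S" "j \<in> words S" unfolding words_def i_def j_def S_def by auto
    have ev: "p ^ nat k / q ^ nat h = exp x"
    proof -
      have "p ^ nat k = exp (ln p) ^ nat k" using assms by simp
      also have "\<dots> = exp (real (nat k) * ln p)" by (rule exp_of_nat_mult[symmetric])
      also have "real (nat k) = of_int k" using hk(1) by simp
      finally have 1: "p ^ nat k = exp (of_int k * ln p)" .
      have "q ^ nat h = exp (ln q) ^ nat h" using assms by simp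
      also have "\<dots> = exp (real (nat h) * ln q)" by (rule exp_of_nat_mult[symmetric])
      also have "real (nat h) = of_int h" using h0 by simp
      finally have 2: "q ^ nat h = exp (of_int h * ln q)" .
      show ?thesis using 1 2 unfolding x_def by (simp add: exp_diff)
    qed
    have comp: "sim_comp (sim_inv (word_map S j)) (word_map S i) = (exp x, 0)"
      unfolding wi wj sim_comp_def sim_inv_def using ev by simp
    have ne: "(exp x, 0) \<noteq> sim_id" using xne by (simp add: sim_id_def)
    have "(exp x, 0) \<in> T" unfolding T_def using comp iw ne by (metis (mono_tags, lifting) DiffI mem_Collect_eq singletonD)
    moreover have "dist (exp x, 0::real) sim_id < e" using de
      by (simp add: sim_id_def dist_Pair_Pair)
    ultimately show ?thesis using ne by blast
  qed
  have "sim_id islimpt T" unfolding islimpt_approachable using key by blast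
  then show ?thesis unfolding WSP_def S_def[symmetric] T_def by simp
qed

end
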